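(* Let $\mathbf M=(M,\vee,(\sqsubseteq^n)_{n\ge 1})$ be a multi-argument specialization semilattice. Then there exist a set $X$ and a closure operation $K$ on $\mathcal P(X)$ such that $\mathbf M$ embeds into the multi-argument specialization semilattice $(\mathcal P(X),\cup,(\sqsubseteq^n)_{n\ge1})$ associated to the closure space $(X,K)$, where $a\sqsubseteq^n b_1,\dots,b_n$ holds iff $a\subseteq Kb_1\cup\dots\cup Kb_n$. That is, there is an injective map $\varphi:M\to\mathcal P(X)$ with $\varphi(a\vee b)=\varphi(a)\cup\varphi(b)$ for all $a,b\in M$, and for all $n\ge1$ and $a,b_1,\dots,b_n\in M$: $a\sqsubseteq^n b_1,\dots,b_n$ in $\mathbf M$ if and only if $\varphi(a)\subseteq K\varphi(b_1)\cup\dots\cup K\varphi(b_n)$.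
   Context: A multi-argument specialization semilattice is a join semilattice $(M,\vee)$ (with order $a\le b$ iff $a\vee b=b$) together with, for each $n\ge1$, an $(n+1)$-ary relation written $a\sqsubseteq^n b_1,\dots,b_n$ (or $a\sqsubseteq b_1,\dots,b_n$), such that for all elements: (M1) $a\sqsubseteq a$; (M2) if $a\sqsubseteq b_1,b_2,\dots,b_n$ and $b_1\sqsubseteq c$ then $a\sqsubseteq c,b_2,\dots,b_n$; (M3) if $a\le b$ and $b\sqsubseteq c_1,\dots,c_m$ then $a\sqsubseteq c_1,\dots,c_m$; (M4) if $a\sqsubseteq b_1,\dots,b_n$ then $a\sqsubseteq b_{\sigma1},\dots,b_{\sigma n}$ for every permutation $\sigma$ of $\{1,\dots,n\}$; (M5) if $a\sqsubseteq b_1,\dots,b_n,b_n$ then $a\sqsubseteq b_1,\dots,b_n$; (M6) if $a\sqsubseteq b_1,\dots,b_n$ then $a\sqsubseteq b_1,\dots,b_n,b_{n+1}$; (M7) if $a\sqsubseteq b_1,\dots,b_n$ and $a_1\sqsubseteq b_1,\dots,b_n$ then $a\vee a_1\sqsubseteq b_1,\dots,b_n$. A closure operation $K$ on $\mathcal P(X)$ is extensive ($x\subseteq Kx$), idempotent ($KKx=Kx$) and isotone ($x\subseteq y\Rightarrow Kx\subseteq Ky$). *)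

theory Defs
  imports "HOL-Combinatorics.Permutations"
begin

text \<open>S a [b1,...,bn] encodes a \<sqsubseteq>^n b1,...,bn; only nonempty lists (n >= 1) matter.\<close>

definition mss :: "('a::semilattice_sup \<Rightarrow> 'a list \<Rightarrow> bool) \<Rightarrow> bool" where
  "mss S \<longleftrightarrow>
     (\<forall>a. S a [a]) \<and>
     (\<forall>a b bs c. S a (b # bs) \<and> S b [c] \<longrightarrow> S a (c # bs)) \<and>
     (\<forall>a b cs. a \<le> b \<and> cs \<noteq> [] \<and> S b cs \<longrightarrow> S a cs) \<and>
     (\<forall>a bs \<sigma>. bs \<noteq> [] \<and> \<sigma> permutes {..<length bs} \<and> S a bs \<longrightarrow>
        S a (map (\<lambda>i. bs ! \<sigma> i) [0..<length bs])) \<and>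
     (\<forall>a bs b. S a (bs @ [b, b]) \<longrightarrow> S a (bs @ [b])) \<and>
     (\<forall>a bs c. bs \<noteq> [] \<and> S a bs \<longrightarrow> S a (bs @ [c])) \<and>
     (\<forall>a a1 bs. bs \<noteq> [] \<and> S a bs \<and> S a1 bs \<longrightarrow> S (sup a a1) bs)"

definition closure_op_on :: "'b set \<Rightarrow> ('b set \<Rightarrow> 'b set) \<Rightarrow> bool" where
  "closure_op_on X K \<longleftrightarrow>
     (\<forall>x. x \<subseteq> X \<longrightarrow> K x \<subseteq> X \<and> x \<subseteq> K x \<and> K (K x) = K x) \<and>
     (\<forall>x y. x \<subseteq> y \<and> y \<subseteq> X \<longrightarrow> K x \<subseteq> K y)"

end

theory Submission
  imports Defs
begin

lemma M1q: "mss S \<Longrightarrow> \<forall>a. S a [a]" unfolding mss_def by (elim conjE) assumption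
lemma M1: "mss S \<Longrightarrow> S a [a]" using M1q[of S] by (metis (no_types))
lemma M2q: "mss S \<Longrightarrow> \<forall>a b bs c. S a (b # bs) \<and> S b [c] \<longrightarrow> S a (c # bs)" unfolding mss_def by (elim conjE) assumption
lemma M2: "mss S \<Longrightarrow> S a (b # bs) \<Longrightarrow> S b [c] \<Longrightarrow> S a (c # bs)" using M2q[of S] by (metis (no_types))
lemma M3q: "mss S \<Longrightarrow> \<forall>a b cs. a \<le> b \<and> cs \<noteq> [] \<and> S b cs \<longrightarrow> S a cs" unfolding mss_def by (elim conjE) assumption
lemma M3: "mss S \<Longrightarrow> a \<le> b \<Longrightarrow> cs \<noteq> [] \<Longrightarrow> S b cs \<Longrightarrow> S a cs" using M3q[of S] by (metis (no_types))
lemma M4q: "mss S \<Longrightarrow> \<forall>a bs \<sigma>. bs \<noteq> [] \<and> \<sigma> permutes {..<length bs} \<and> S a bs \<longrightarrow> S a (map (\<lambda>i. bs ! \<sigma> i) [0..<length bs])" unfolding mss_def by (elim conjE) assumption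
lemma M4: "mss S \<Longrightarrow> bs \<noteq> [] \<Longrightarrow> \<sigma> permutes {..<length bs} \<Longrightarrow> S a bs \<Longrightarrow> S a (map (\<lambda>i. bs ! \<sigma> i) [0..<length bs])" using M4q[of S] by (metis (no_types))
lemma M5q: "mss S \<Longrightarrow> \<forall>a bs b. S a (bs @ [b, b]) \<longrightarrow> S a (bs @ [b])" unfolding mss_def by (elim conjE) assumption
lemma M5: "mss S \<Longrightarrow> S a (bs @ [b, b]) \<Longrightarrow> S a (bs @ [b])" using M5q[of S] by (metis (no_types))
lemma M6q: "mss S \<Longrightarrow> \<forall>a bs c. bs \<noteq> [] \<and> S a bs \<longrightarrow> S a (bs @ [c])" unfolding mss_def by (elim conjE) assumption
lemma M6: "mss S \<Longrightarrow> bs \<noteq> [] \<Longrightarrow> S a bs \<Longrightarrow> S a (bs @ [c])" using M6q[of S] by (metis (no_types))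
lemma M7q: "mss S \<Longrightarrow> \<forall>a a1 bs. bs \<noteq> [] \<and> S a bs \<and> S a1 bs \<longrightarrow> S (sup a a1) bs" unfolding mss_def by (elim conjE) assumption
lemma M7: "mss S \<Longrightarrow> bs \<noteq> [] \<Longrightarrow> S a bs \<Longrightarrow> S a1 bs \<Longrightarrow> S (sup a a1) bs" using M7q[of S] by (metis (no_types))

lemma mss_perm:
  assumes m: "mss S" and s: "S a xs" and e: "mset xs = mset ys"
  shows "S a ys"
proof (cases "xs = []")
  case True then show ?thesis using s e by simp
next
  case False
  obtain p where p: "p permutes {..<length xs}" "permute_list p xs = ys"
    using mset_eq_permutation[OF e[symmetric]] by blast
  have "S a (map (\<lambda>i. xs ! p i) [0..<length xs])"
    using M4[OF m False p(1) s] .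
  then show ?thesis using p(2) unfolding permute_list_def by simp
qed

lemma mss_ext:
  assumes m: "mss S"
  shows "S a xs \<Longrightarrow> xs \<noteq> [] \<Longrightarrow> S a (xs @ es)"
proof (induction es arbitrary: xs)
  case Nil then show ?case by simp
next
  case (Cons e es)
  have "S a (xs @ [e])" using M6[OF m] Cons.prems by blast
  from Cons.IH[OF this] show ?case by simp
qed

lemma mss_shrink:
  assumes m: "mss S"
  shows "S a (xs @ ys) \<Longrightarrow> ys \<noteq> [] \<Longrightarrow> set xs \<subseteq> set ys \<Longrightarrow> S a ys"
proof (induction xs)
  case Nil then show ?case by simp
next
  case (Cons x xs)
  have xin: "x \<in> set ys" using Cons.prems by simp
  define ys' where "ys' = remove1 x ys"
  have "mset ((x # xs) @ ys) = mset ((xs @ ys') @ [x, x])"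
    using xin by (simp add: ys'_def)
  then have "S a ((xs @ ys') @ [x, x])" using mss_perm[OF m Cons.prems(1)] by blast
  then have "S a ((xs @ ys') @ [x])" using M5[OF m] by blast
  moreover have "mset ((xs @ ys') @ [x]) = mset (xs @ ys)"
    using xin by (simp add: ys'_def)
  ultimately have "S a (xs @ ys)" using mss_perm[OF m] by blast
  then show ?case using Cons by simp
qed

lemma mss_sub:
  assumes m: "mss S" and "S a ds" "ds \<noteq> []" "set ds \<subseteq> set bs"
  shows "S a bs"
proof -
  have "bs \<noteq> []" using assms by auto
  moreover have "S a (ds @ bs)" using mss_ext[OF m] assms by blast
  ultimately show ?thesis using mss_shrink[OF m] assms by blast
qed

lemma mss_repl:
  assumes m: "mss S"
  shows "S a (xs @ ys) \<Longrightarrow> \<forall>c\<in>set xs. \<exists>x\<in>set bs. S c [x] \<Longrightarrow>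
     \<exists>zs. set zs \<subseteq> set bs \<and> length zs = length xs \<and> S a (zs @ ys)"
proof (induction xs arbitrary: ys)
  case Nil then show ?case by simp
next
  case (Cons c xs)
  obtain x where x: "x \<in> set bs" "S c [x]" using Cons.prems by auto
  have "S a (c # (xs @ ys))" using Cons.prems by simp
  then have "S a (x # (xs @ ys))" using M2[OF m _ x(2)] by blast
  then have "S a (xs @ (ys @ [x]))" by (rule mss_perm[OF m]) simp
  moreover have "\<forall>c\<in>set xs. \<exists>x\<in>set bs. S c [x]" using Cons.prems(2) by simp
  ultimately have "\<exists>zs. set zs \<subseteq> set bs \<and> length zs = length xs \<and> S a (zs @ ys @ [x])"
    using Cons.IH[of "ys @ [x]"] by simp
  then obtain zs where zs: "set zs \<subseteq> set bs" "length zs = length xs" "S a (zs @ ys @ [x])"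
    by blast
  have "S a ((zs @ [x]) @ ys)" by (rule mss_perm[OF m zs(3)]) simp
  then show ?case using zs x by (intro exI[of _ "zs @ [x]"]) auto
qed

definition good :: "('a::semilattice_sup \<Rightarrow> 'a list \<Rightarrow> bool) \<Rightarrow> 'a set \<Rightarrow> 'a set \<Rightarrow> bool" where
  "good S J N \<longleftrightarrow> (\<forall>x y. x \<le> y \<and> y \<in> J \<longrightarrow> x \<in> J) \<and> (\<forall>x y. x \<in> J \<and> y \<in> J \<longrightarrow> sup x y \<in> J)
     \<and> N \<subseteq> J \<and> (\<forall>c c'. c \<in> N \<and> S c' [c] \<longrightarrow> c' \<in> N)
     \<and> (\<forall>a bs. bs \<noteq> [] \<and> set bs \<subseteq> N \<and> S a bs \<longrightarrow> a \<in> J)"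

lemma good_P0:
  assumes m: "mss S" and bs: "bs \<noteq> []"
  shows "good S {c. S c bs} {c. \<exists>x\<in>set bs. S c [x]}"
  unfolding good_def
proof (intro conjI allI impI)
  fix x y assume "x \<le> y \<and> y \<in> {c. S c bs}"
  then show "x \<in> {c. S c bs}" using M3[OF m _ bs] by blast
next
  fix x y assume "x \<in> {c. S c bs} \<and> y \<in> {c. S c bs}"
  then show "sup x y \<in> {c. S c bs}" using M7[OF m bs] by blast
next
  show "{c. \<exists>x\<in>set bs. S c [x]} \<subseteq> {c. S c bs}"
    using mss_sub[OF m, of _ "[_]" bs] by auto
next
  fix c c' assume "c \<in> {c. \<exists>x\<in>set bs. S c [x]} \<and> S c' [c]"
  then obtain x where "x \<in> set bs" "S c [x]" "S c' [c]" by auto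
  then have "S c' [x]" using M2[OF m, of c' c "[]" x] by simp
  then show "c' \<in> {c. \<exists>x\<in>set bs. S c [x]}" using \<open>x \<in> set bs\<close> by auto
next
  fix a cs assume h: "cs \<noteq> [] \<and> set cs \<subseteq> {c. \<exists>x\<in>set bs. S c [x]} \<and> S a cs"
  then obtain zs where zs: "set zs \<subseteq> set bs" "length zs = length cs" "S a (zs @ [])"
    using mss_repl[OF m, of a cs "[]" bs] by auto
  then have "zs \<noteq> []" using h by auto
  then show "a \<in> {c. S c bs}" using mss_sub[OF m, of a zs bs] zs by auto
qed

lemma good_P1:
  "good S {x. x \<le> b} {}"
  unfolding good_def by (auto intro: order_trans)

theorem corollary5p2:
  fixes S :: "'a::semilattice_sup \<Rightarrow> 'a list \<Rightarrow> bool"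
  assumes "mss S"
  shows "\<exists>(X :: 'a set set set) K \<phi>.
           closure_op_on X K \<and> inj \<phi> \<and> (\<forall>a. \<phi> a \<subseteq> X) \<and>
           (\<forall>a b. \<phi> (sup a b) = \<phi> a \<union> \<phi> b) \<and>
           (\<forall>a bs. bs \<noteq> [] \<longrightarrow> (S a bs \<longleftrightarrow> \<phi> a \<subseteq> (\<Union>b\<in>set bs. K (\<phi> b))))"
proof -
  note m = assms
  define X :: "'a set set set" where "X = {P. P \<noteq> {} \<and> good S (\<Union>P) (\<Inter>P)}"
  define \<phi> where "\<phi> a = {P \<in> X. a \<notin> \<Union>P}" for a
  define U where "U b = {P \<in> X. b \<notin> \<Inter>P}" for b
  define cl where "cl C \<longleftrightarrow> C \<subseteq> X \<and> (\<forall>b. \<phi> b \<subseteq> C \<longrightarrow> U b \<subseteq> C)" for C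
  define K where "K Y = \<Inter>{C. cl C \<and> Y \<subseteq> C}" for Y
  define P0 where "P0 bs = {{c. S c bs}, {c. \<exists>x\<in>set bs. S c [x]}}" for bs
  have P0: "P0 bs \<in> X" "\<Union>(P0 bs) = {c. S c bs}" "\<Inter>(P0 bs) = {c. \<exists>x\<in>set bs. S c [x]}"
    if "bs \<noteq> []" for bs
  proof -
    have sub: "{c. \<exists>x\<in>set bs. S c [x]} \<subseteq> {c. S c bs}"
      using good_P0[OF m that] unfolding good_def by blast
    show u: "\<Union>(P0 bs) = {c. S c bs}" using sub unfolding P0_def by auto
    show i: "\<Inter>(P0 bs) = {c. \<exists>x\<in>set bs. S c [x]}" using sub unfolding P0_def by auto
    show "P0 bs \<in> X" unfolding X_def using u i good_P0[OF m that] by (auto simp: P0_def)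
  qed
  have key: "\<not> S a bs \<Longrightarrow> bs \<noteq> [] \<Longrightarrow> P0 bs \<in> \<phi> a \<and> (\<forall>b\<in>set bs. P0 bs \<notin> U b)" for a bs
  proof -
    assume "\<not> S a bs" "bs \<noteq> []"
    moreover have "S b [b]" for b using M1[OF m] .
    ultimately have "P0 bs \<in> X" "a \<notin> \<Union>(P0 bs)" "\<forall>b\<in>set bs. b \<in> \<Inter>(P0 bs)"
      using P0[of bs] by auto
    then show ?thesis unfolding \<phi>_def U_def by blast
  qed
  have goodX: "P \<in> X \<Longrightarrow> good S (\<Union>P) (\<Inter>P)" for P unfolding X_def by auto
  have phiU: "\<phi> b \<subseteq> U b" for b unfolding \<phi>_def U_def X_def by auto
  have clX: "cl X" unfolding cl_def U_def by auto
  have clU: "cl (U b)" for b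
    unfolding cl_def
  proof (intro conjI allI impI)
    show "U b \<subseteq> X" unfolding U_def by auto
    fix b' assume h: "\<phi> b' \<subseteq> U b"
    have "S b' [b]" using key[of b' "[b]"] h by auto
    then show "U b' \<subseteq> U b" using goodX unfolding U_def good_def by blast
  qed
  have clK: "cl (K Y)" if "Y \<subseteq> X" for Y
  proof -
    have "K Y \<subseteq> X" unfolding K_def using clX that by blast
    moreover have "U b \<subseteq> K Y" if h: "\<phi> b \<subseteq> K Y" for b
    proof
      fix x assume x: "x \<in> U b"
      show "x \<in> K Y" unfolding K_def
      proof
        fix C assume C: "C \<in> {C. cl C \<and> Y \<subseteq> C}"
        then have "\<phi> b \<subseteq> C" using h unfolding K_def by blast
        then show "x \<in> C" using C x unfolding cl_def by blast
      qed
    qed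
    ultimately show ?thesis unfolding cl_def by blast
  qed
  have KU: "K (\<phi> b) = U b" for b
  proof
    show "K (\<phi> b) \<subseteq> U b" unfolding K_def using clU phiU by blast
    show "U b \<subseteq> K (\<phi> b)" unfolding K_def cl_def by blast
  qed
  have "closure_op_on X K"
    unfolding closure_op_on_def
  proof (intro conjI allI impI)
    fix x assume x: "x \<subseteq> X"
    show "K x \<subseteq> X" unfolding K_def using clX x by blast
    show "x \<subseteq> K x" unfolding K_def by blast
    have "K (K x) \<subseteq> K x" unfolding K_def[of "K x"] using clK[OF x] by blast
    moreover have "K x \<subseteq> K (K x)" unfolding K_def[of "K x"] by blast
    ultimately show "K (K x) = K x" by blast
  next
    fix x y assume "x \<subseteq> y \<and> y \<subseteq> X"
    then show "K x \<subseteq> K y" unfolding K_def by blast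
  qed
  moreover have "inj \<phi>"
  proof (rule injI)
    fix a b assume e: "\<phi> a = \<phi> b"
    have "a \<le> b" if e: "\<phi> a = \<phi> b" for a b
    proof (rule ccontr)
      assume na: "\<not> a \<le> b"
      define P1 where "P1 = {{x. x \<le> b}, {}}"
      have "P1 \<in> X" unfolding X_def P1_def using good_P1[of S b] by auto
      then have "P1 \<in> \<phi> a" "P1 \<notin> \<phi> b" unfolding \<phi>_def P1_def using na by auto
      then show False using e by simp
    qed
    then show "a = b" using e by (metis order.antisym)
  qed
  moreover have "\<forall>a. \<phi> a \<subseteq> X" unfolding \<phi>_def by auto
  moreover have "\<forall>a b. \<phi> (sup a b) = \<phi> a \<union> \<phi> b"
  proof (intro allI)
    fix a b
    have "sup a b \<in> \<Union>P \<longleftrightarrow> a \<in> \<Union>P \<and> b \<in> \<Union>P" if "P \<in> X" for P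
      using goodX[OF that] unfolding good_def by (meson sup_ge1 sup_ge2)
    then show "\<phi> (sup a b) = \<phi> a \<union> \<phi> b" unfolding \<phi>_def by auto
  qed
  moreover have "\<forall>a bs. bs \<noteq> [] \<longrightarrow> (S a bs \<longleftrightarrow> \<phi> a \<subseteq> (\<Union>b\<in>set bs. K (\<phi> b)))"
  proof (intro allI impI iffI)
    fix a bs assume bs: "bs \<noteq> []" and s: "S a bs"
    show "\<phi> a \<subseteq> (\<Union>b\<in>set bs. K (\<phi> b))"
    proof
      fix P assume P: "P \<in> \<phi> a"
      then have "P \<in> X" "a \<notin> \<Union>P" unfolding \<phi>_def by auto
      then have "\<not> set bs \<subseteq> \<Inter>P" using goodX[of P] s bs unfolding good_def by blast
      then obtain b where "b \<in> set bs" "b \<notin> \<Inter>P" by blast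
      then show "P \<in> (\<Union>b\<in>set bs. K (\<phi> b))" using \<open>P \<in> X\<close> unfolding KU U_def by auto
    qed
  next
    fix a bs assume bs: "bs \<noteq> []" and h: "\<phi> a \<subseteq> (\<Union>b\<in>set bs. K (\<phi> b))"
    show "S a bs"
    proof (rule ccontr)
      assume "\<not> S a bs"
      from key[OF this bs] h show False unfolding KU by blast
    qed
  qed
  ultimately show ?thesis by blast
qed

end
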